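(* Let $D$ be a knot diagram and let $D'$ be the knot diagram obtained from $D$ by increasing the number of full twists in some twist region of $D$. Then $D$ is in straight position if and only if $D'$ is in straight position.
   Context: A knot diagram is in straight position if the knot can be decomposed into two sub-arcs such that each sub-arc never crosses itself (equivalently, there is an arc of the knot that passes through every crossing of the diagram without meeting itself at a crossing). A twist region of a diagram consists of a maximal collection of bigon regions arranged end to end; a single crossing adjacent to no bigons is also a twist region. Increasing the number of full twists of a twist region means adding an even number of alternating crossings to the twist region in such a way that no new crossings can be removed by Reidemeister type 2 moves. *)

theory Defs
  imports Main
begin

text \<open>A knot diagram (on the sphere, equivalently in the plane) with n crossings is encoded by
its signed Gauss code: traversing the (oriented) knot from a base point we obtain a cyclic word of
length 2n; each entry is (crossing label, whether this passage is the over-passage, whether the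
crossing is positive).

Position i of the word is a visit of the curve to crossing lbl D i; edge i of the diagram runs
from position i to position (i+1) mod 2n. A dart (i,True) is the half-edge leaving position i
(along edge i), a dart (i,False) the half-edge arriving at position i (along edge i-1).
The crossing sign determines the cyclic (counter-clockwise) order of the four half-edges around
the crossing (rotation drot); the edge involution is dalpha. Faces of the induced embedding of the
4-valent shadow are the orbits of dphi = drot o dalpha, and the code is realised by a diagram on
the sphere iff Euler's formula V - E + F = 2 holds, i.e. F = n + 2.\<close>

type_synonym gcode = "(nat \<times> bool \<times> bool) list"
type_synonym dart = "nat \<times> bool"

definition lbl :: "gcode \<Rightarrow> nat \<Rightarrow> nat" where
  "lbl D i = fst (D ! i)"

definition is_over :: "gcode \<Rightarrow> nat \<Rightarrow> bool" where
  "is_over D i = fst (snd (D ! i))"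

definition is_pos :: "gcode \<Rightarrow> nat \<Rightarrow> bool" where
  "is_pos D i = snd (snd (D ! i))"

definition crossings :: "gcode \<Rightarrow> nat set" where
  "crossings D = fst ` set D"

definition knot_code :: "gcode \<Rightarrow> bool" where
  "knot_code D \<longleftrightarrow>
     (\<forall>x\<in>crossings D. card {i. i < length D \<and> lbl D i = x} = 2) \<and>
     (\<forall>i<length D. \<forall>j<length D. i \<noteq> j \<and> lbl D i = lbl D j \<longrightarrow>
          is_over D i \<noteq> is_over D j \<and> is_pos D i = is_pos D j)"

definition partner :: "gcode \<Rightarrow> nat \<Rightarrow> nat" where
  "partner D i = (THE j. j < length D \<and> j \<noteq> i \<and> lbl D j = lbl D i)"

definition darts :: "gcode \<Rightarrow> dart set" where
  "darts D = {0..<length D} \<times> UNIV"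

definition dalpha :: "gcode \<Rightarrow> dart \<Rightarrow> dart" where
  "dalpha D = (\<lambda>(i, b). if b then ((i + 1) mod length D, False)
                          else ((i + length D - 1) mod length D, True))"

definition drot :: "gcode \<Rightarrow> dart \<Rightarrow> dart" where
  "drot D = (\<lambda>(i, b). (partner D i, if is_pos D i = is_over D i then b else \<not> b))"

definition dphi :: "gcode \<Rightarrow> dart \<Rightarrow> dart" where
  "dphi D = drot D \<circ> dalpha D"

definition face :: "gcode \<Rightarrow> dart \<Rightarrow> dart set" where
  "face D d = {(dphi D ^^ k) d | k. True}"

definition faces :: "gcode \<Rightarrow> dart set set" where
  "faces D = face D ` darts D"

definition knot_diagram :: "gcode \<Rightarrow> bool" where
  "knot_diagram D \<longleftrightarrow> knot_code D \<and>
     (D = [] \<or> card (faces D) = card (crossings D) + 2)"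

text \<open>The knot splits (at two points off the crossings) into two sub-arcs, neither of which
passes through a crossing twice: a cyclic rotation of the Gauss word splits as A @ B with no
repeated crossing in A nor in B.\<close>

definition straight_position :: "gcode \<Rightarrow> bool" where
  "straight_position D \<longleftrightarrow>
     (\<exists>k A B. rotate k D = A @ B \<and> distinct (map fst A) \<and> distinct (map fst B))"

definition dart_crossing :: "gcode \<Rightarrow> dart \<Rightarrow> nat" where
  "dart_crossing D d = lbl D (fst d)"

definition dedge :: "gcode \<Rightarrow> dart \<Rightarrow> nat" where
  "dedge D = (\<lambda>(i, b). if b then i else (i + length D - 1) mod length D)"

definition is_bigon :: "gcode \<Rightarrow> dart set \<Rightarrow> bool" where
  "is_bigon D F \<longleftrightarrow> F \<in> faces D \<and> card F = 2 \<and> card (dart_crossing D ` F) = 2"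

definition bigon_adj :: "gcode \<Rightarrow> nat \<Rightarrow> nat \<Rightarrow> bool" where
  "bigon_adj D x y \<longleftrightarrow> x \<noteq> y \<and> (\<exists>F. is_bigon D F \<and> dart_crossing D ` F = {x, y})"

text \<open>A twist region: a maximal collection of bigons arranged end to end, given by its set of
crossings (a class of crossings connected through bigons; a crossing meeting no bigon forms a
twist region by itself).\<close>
definition twist_region :: "gcode \<Rightarrow> nat set \<Rightarrow> bool" where
  "twist_region D T \<longleftrightarrow> (\<exists>x\<in>crossings D. T = {y. (bigon_adj D)\<^sup>*\<^sup>* x y})"

text \<open>a bigon that can be removed by a Reidemeister II move: one strand over at both ends\<close>
definition r2_bigon :: "gcode \<Rightarrow> dart set \<Rightarrow> bool" where
  "r2_bigon D F \<longleftrightarrow> is_bigon D F \<and>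
     (\<exists>d\<in>F. is_over D (dedge D d) = is_over D ((dedge D d + 1) mod length D))"

definition ins2 :: "nat \<Rightarrow> 'a list \<Rightarrow> nat \<Rightarrow> 'a list \<Rightarrow> 'a list \<Rightarrow> 'a list" where
  "ins2 g1 A1 g2 A2 L =
    (if g1 \<le> g2 then take g1 L @ A1 @ take (g2 - g1) (drop g1 L) @ A2 @ drop g2 L
     else take g2 L @ A2 @ take (g1 - g2) (drop g2 L) @ A1 @ drop g1 L)"

text \<open>Twist the two edges bounding the corner (d, drot D d) at the crossing of d around each
other, creating new crossings Y!0, Y!1, ... (in order of distance from the corner) along both
edges, with alternating over/under along each strand (continuing the alternation from the
corner crossing), and with the sign of the corner crossing (forced by the geometry).\<close>
definition add_twists :: "gcode \<Rightarrow> dart \<Rightarrow> nat list \<Rightarrow> gcode" where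
  "add_twists D d Y =
    (let p = fst d; c = drot D d; ov = is_over D p; s = is_pos D p;
         Le = map (\<lambda>k. (Y ! k, ov = odd k, s)) [0..<length Y];
         Lf = map (\<lambda>k. (Y ! k, \<not> (ov = odd k), s)) [0..<length Y];
         Ae = (if snd d then Le else rev Le);
         Af = (if snd c then Lf else rev Lf)
     in ins2 (dedge D d + 1) Ae (dedge D c + 1) Af D)"

text \<open>D' arises from D by adding m \<ge> 1 full twists (2m alternating crossings) to a twist region,
so that no new crossing can be removed by a Reidemeister II move. The twisting happens at a
corner of a crossing of the region which is a bigon of the region or opposite such a bigon (for
a crossing meeting no bigon, any corner).\<close>
definition twist_increase :: "gcode \<Rightarrow> gcode \<Rightarrow> bool" where
  "twist_increase D D' \<longleftrightarrow>
    (\<exists>T d Y m. twist_region D T \<and> d \<in> darts D \<and> dart_crossing D d \<in> T \<and>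
       m \<ge> 1 \<and> length Y = 2 * m \<and> distinct Y \<and> set Y \<inter> crossings D = {} \<and>
       dedge D d \<noteq> dedge D (drot D d) \<and>
       (is_bigon D (face D (drot D d)) \<or> is_bigon D (face D ((drot D ^^ 3) d)) \<or>
        \<not> (\<exists>y. bigon_adj D (dart_crossing D d) y)) \<and>
       D' = add_twists D d Y \<and>
       (\<forall>F. r2_bigon D' F \<longrightarrow> dart_crossing D' ` F \<inter> set Y = {}))"

end

theory Submission
  imports Defs
begin

definition ins :: "nat \<Rightarrow> 'a list \<Rightarrow> 'a list \<Rightarrow> 'a list" where
  "ins g A L = take g L @ A @ drop g L"

lemma ins_ins: "g1 \<le> g2 \<Longrightarrow> g2 \<le> length L \<Longrightarrow>
   ins g1 A1 (ins g2 A2 L) = take g1 L @ A1 @ take (g2 - g1) (drop g1 L) @ A2 @ drop g2 L"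
proof -
  assume h: "g1 \<le> g2" "g2 \<le> length L"
  have l: "length (take g2 L) = g2" using h by simp
  have t: "take g1 (take g2 L @ Y) = take g1 L" for Y :: "'a list"
    using l h by (simp add: min_def)
  have d: "drop g1 (take g2 L @ Y) = take (g2 - g1) (drop g1 L) @ Y" for Y :: "'a list"
    using l h by (simp add: drop_take)
  show ?thesis unfolding ins_def t d by (rule refl)
qed

lemma ins2_le: "g1 \<le> g2 \<Longrightarrow> g2 \<le> length L \<Longrightarrow> ins2 g1 A1 g2 A2 L = ins g1 A1 (ins g2 A2 L)"
  by (simp add: ins_ins ins2_def)

lemma ins2_gt: "g2 < g1 \<Longrightarrow> g1 \<le> length L \<Longrightarrow> ins2 g1 A1 g2 A2 L = ins g2 A2 (ins g1 A1 L)"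
  by (simp add: ins_ins ins2_def)

lemma length_ins: "g \<le> length L \<Longrightarrow> length (ins g A L) = length A + length L"
  unfolding ins_def by simp

lemma zip_ins: "length A = length B \<Longrightarrow> length L = length M \<Longrightarrow>
   zip (ins g A L) (ins g B M) = ins g (zip A B) (zip L M)"
  unfolding ins_def by (simp add: zip_append take_zip drop_zip)

lemma map_ins: "map f (ins g A L) = ins g (map f A) (map f L)"
  unfolding ins_def by (simp add: take_map drop_map)

lemma filter_ins: "\<forall>x\<in>set A. \<not> P x \<Longrightarrow> filter P (ins g A L) = filter P L"
proof -
  assume h: "\<forall>x\<in>set A. \<not> P x"
  have "filter P A = []" using h by (simp add: filter_empty_conv)
  moreover have "filter P L = filter P (take g L) @ filter P (drop g L)"
    by (metis append_take_drop_id filter_append)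
  ultimately show ?thesis unfolding ins_def by simp
qed


lemma set_ins: "set (ins g A L) = set A \<union> set L"
proof -
  have "set L = set (take g L) \<union> set (drop g L)" by (metis append_take_drop_id set_append)
  then show ?thesis unfolding ins_def by auto
qed


lemma distinct_ins: "distinct (ins g A L) \<longleftrightarrow> distinct A \<and> distinct L \<and> set A \<inter> set L = {}"
proof -
  have sL: "set L = set (take g L) \<union> set (drop g L)" by (metis append_take_drop_id set_append)
  have dL: "distinct L \<longleftrightarrow> distinct (take g L) \<and> distinct (drop g L) \<and> set (take g L) \<inter> set (drop g L) = {}"
    by (metis append_take_drop_id distinct_append)
  show ?thesis unfolding ins_def distinct_append set_append dL sL by blast
qed


lemma nth_ins: "g \<le> length L \<Longrightarrow> i < length A + length L \<Longrightarrow>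
   ins g A L ! i = (if i < g then L ! i else if i < g + length A then A ! (i - g) else L ! (i - length A))"
  unfolding ins_def by (auto simp: nth_append min_def)

definition intv :: "bool list \<Rightarrow> bool" where
  "intv bs \<longleftrightarrow> (\<exists>x y z c. bs = replicate x c @ replicate y (\<not> c) @ replicate z c)"

lemma intv_idx: "intv bs \<longleftrightarrow> (\<exists>a b c. a \<le> b \<and> b \<le> length bs \<and>
    (\<forall>i<length bs. bs ! i = (c \<noteq> (a \<le> i \<and> i < b))))"
proof
  assume "intv bs"
  then obtain x y z c where bs: "bs = replicate x c @ replicate y (\<not> c) @ replicate z c"
    unfolding intv_def by blast
  show "\<exists>a b c. a \<le> b \<and> b \<le> length bs \<and> (\<forall>i<length bs. bs ! i = (c \<noteq> (a \<le> i \<and> i < b)))"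
    by (rule exI[of _ x], rule exI[of _ "x+y"], rule exI[of _ c]) (auto simp: bs nth_append)
next
  assume "\<exists>a b c. a \<le> b \<and> b \<le> length bs \<and> (\<forall>i<length bs. bs ! i = (c \<noteq> (a \<le> i \<and> i < b)))"
  then obtain a b c where ab: "a \<le> b" "b \<le> length bs" and h: "\<forall>i<length bs. bs ! i = (c \<noteq> (a \<le> i \<and> i < b))"
    by blast
  have "bs = replicate a c @ replicate (b - a) (\<not> c) @ replicate (length bs - b) c"
    by (rule nth_equalityI) (use ab h in \<open>auto simp: nth_append\<close>)
  then show "intv bs" unfolding intv_def by blast
qed

lemma arith_key:
  fixes a b n g k :: nat
  assumes ab: "a \<le> b" "b \<le> n" and g: "0 < g" "g \<le> n"
    and s: "s = (c \<noteq> (a \<le> g - 1 \<and> g - 1 < b)) \<or> s = (c \<noteq> (a \<le> g mod n \<and> g mod n < b))"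
  shows "\<exists>a' b' c'. a' \<le> b' \<and> b' \<le> n + k \<and> (\<forall>i<n+k.
     (if i < g then (c \<noteq> (a \<le> i \<and> i < b)) else if i < g + k then s else (c \<noteq> (a \<le> i - k \<and> i - k < b)))
       = (c' \<noteq> (a' \<le> i \<and> i < b')))"
proof -
  consider "g < a" | "g = a" | "a < g \<and> g < b" | "a < g \<and> g = b" | "b < g \<and> g < n" | "b < g \<and> g = n"
    using ab g by linarith
  then show ?thesis
  proof cases
    case 1
    have gm: "g mod n = g" using 1 ab by simp
    have "s = c" using s gm 1 by auto
    then show ?thesis using 1 ab
      by (intro exI[of _ "a+k"] exI[of _ "b+k"] exI[of _ c]) (cases c; (auto; linarith))
  next
    case 2
    show ?thesis
    proof (cases "s = c")
      case True
      then show ?thesis using 2 ab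
        by (intro exI[of _ "a+k"] exI[of _ "b+k"] exI[of _ c]) (cases c; (auto; linarith))
    next
      case False
      then have "s = (\<not> c)" by auto
      then show ?thesis using 2 ab
        by (intro exI[of _ "a"] exI[of _ "b+k"] exI[of _ c]) (cases c; (auto; linarith))
    qed
  next
    case 3
    have gm: "g mod n = g" using 3 ab by simp
    have "s = (\<not> c)" using s gm 3 by auto
    then show ?thesis using 3 ab
      by (intro exI[of _ "a"] exI[of _ "b+k"] exI[of _ c]) (cases c; (auto; linarith))
  next
    case 4
    show ?thesis
    proof (cases "s = c")
      case True
      then show ?thesis using 4 ab
        by (intro exI[of _ "a"] exI[of _ "b"] exI[of _ c]) (cases c; (auto; linarith))
    next
      case False
      then have "s = (\<not> c)" by auto
      then show ?thesis using 4 ab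
        by (intro exI[of _ "a"] exI[of _ "b+k"] exI[of _ c]) (cases c; (auto; linarith))
    qed
  next
    case 5
    have gm: "g mod n = g" using 5 ab by simp
    have "s = c" using s gm 5 by auto
    then show ?thesis using 5 ab
      by (intro exI[of _ "a"] exI[of _ "b"] exI[of _ c]) (cases c; (auto; linarith))
  next
    case 6
    show ?thesis
    proof (cases "s = c")
      case True
      then show ?thesis using 6 ab
        by (intro exI[of _ "a"] exI[of _ "b"] exI[of _ c]) (cases c; (auto; linarith))
    next
      case False
      then have sc: "s = (\<not> c)" by auto
      have gm: "g mod n = 0" using 6 by simp
      have a0: "a = 0" "0 < b" using s gm sc False 6 by auto
      show ?thesis using 6 ab a0 sc
        by (intro exI[of _ "b"] exI[of _ "n"] exI[of _ "\<not> c"]) (cases c; (auto; linarith))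
    qed
  qed
qed

lemma ins_intv:
  assumes "intv bs" "0 < g" "g \<le> length bs"
    and s: "s = bs ! (g - 1) \<or> s = bs ! (g mod length bs)"
  shows "intv (ins g (replicate k s) bs)"
proof -
  obtain a b c where ab: "a \<le> b" "b \<le> length bs" and h: "\<And>i. i<length bs \<Longrightarrow> bs ! i = (c \<noteq> (a \<le> i \<and> i < b))"
    using assms(1) unfolding intv_idx by blast
  define n where "n = length bs"
  have gn: "g \<le> n" using assms(3) n_def by simp
  have len: "length (ins g (replicate k s) bs) = n + k" using assms(3) by (simp add: length_ins n_def)
  have nth: "ins g (replicate k s) bs ! i =
     (if i < g then (c \<noteq> (a \<le> i \<and> i < b)) else if i < g + k then s else (c \<noteq> (a \<le> i - k \<and> i - k < b)))"
    if i: "i < n + k" for i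
  proof -
    have "ins g (replicate k s) bs ! i = (if i < g then bs ! i else if i < g + k then s else bs ! (i - k))"
      using assms(3) i by (simp add: nth_ins n_def)
    moreover have "i < g \<Longrightarrow> bs ! i = (c \<noteq> (a \<le> i \<and> i < b))" using h gn n_def by simp
    moreover have "\<not> i < g + k \<Longrightarrow> bs ! (i - k) = (c \<noteq> (a \<le> i - k \<and> i - k < b))"
      using h i n_def by simp
    ultimately show ?thesis by simp
  qed
  have s1: "s = (c \<noteq> (a \<le> g - 1 \<and> g - 1 < b)) \<or> s = (c \<noteq> (a \<le> g mod n \<and> g mod n < b))"
  proof -
    have "g - 1 < n" "g mod n < n" using assms(2) gn by auto
    then show ?thesis using s h n_def by simp
  qed
  obtain a' b' c' where k: "a' \<le> b'" "b' \<le> n + k" and kk: "\<forall>i<n+k.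
     (if i < g then (c \<noteq> (a \<le> i \<and> i < b)) else if i < g + k then s else (c \<noteq> (a \<le> i - k \<and> i - k < b)))
       = (c' \<noteq> (a' \<le> i \<and> i < b'))"
    using arith_key[OF ab(1) ab(2)[folded n_def] assms(2) gn s1, of k] by blast
  show ?thesis unfolding intv_idx len
    by (rule exI[of _ a'], rule exI[of _ b'], rule exI[of _ c']) (use k kk nth in auto)
qed

definition tagl :: "(nat \<times> bool \<times> bool) \<times> bool \<Rightarrow> nat \<times> bool" where
  "tagl p = (fst (fst p), snd p)"

lemma dmap: "distinct (map (\<lambda>z. (fst z, c)) X) \<longleftrightarrow> distinct (map fst X)"
  by (induct X) auto

lemma tag_zip_rep: "map tagl (zip X (replicate (length X) c)) = map (\<lambda>z. (fst z, c)) X"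
  by (simp add: zip_replicate2 tagl_def)

lemma dswap: "distinct (xs @ ys) \<Longrightarrow> distinct (ys @ xs)"
  by auto

lemma sp_PQR: "straight_position L \<longleftrightarrow>
   (\<exists>P Q R. L = P @ Q @ R \<and> distinct (map fst Q) \<and> distinct (map fst (P @ R)))"
proof
  assume "straight_position L"
  then obtain k A B where r: "rotate k L = A @ B" and dA: "distinct (map fst A)" and dB: "distinct (map fst B)"
    unfolding straight_position_def by blast
  define X where "X = drop (k mod length L) L"
  define W where "W = take (k mod length L) L"
  have L: "L = W @ X" unfolding X_def W_def by simp
  have "X @ W = A @ B" using r unfolding X_def W_def by (simp add: rotate_drop_take)
  then obtain us where "(X = A @ us \<and> us @ W = B) \<or> (X @ us = A \<and> W = us @ B)"
    unfolding append_eq_append_conv2 by blast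
  then show "\<exists>P Q R. L = P @ Q @ R \<and> distinct (map fst Q) \<and> distinct (map fst (P @ R))"
  proof
    assume h: "X = A @ us \<and> us @ W = B"
    have "distinct (map fst us @ map fst W)" using dB h by (metis map_append)
    then have "distinct (map fst W @ map fst us)" by (rule dswap)
    then show ?thesis
      by (rule_tac exI[of _ W], rule_tac exI[of _ A], rule_tac exI[of _ us]) (use h L dA in auto)
  next
    assume h: "X @ us = A \<and> W = us @ B"
    have "distinct (map fst X @ map fst us)" using dA h by (metis map_append)
    then have "distinct (map fst us @ map fst X)" by (rule dswap)
    then show ?thesis
      by (rule_tac exI[of _ us], rule_tac exI[of _ B], rule_tac exI[of _ X]) (use h L dB in auto)
  qed
next
  assume "\<exists>P Q R. L = P @ Q @ R \<and> distinct (map fst Q) \<and> distinct (map fst (P @ R))"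
  then obtain P Q R where L: "L = P @ Q @ R" and d: "distinct (map fst Q)" "distinct (map fst (P @ R))"
    by blast
  have "rotate (length P) L = Q @ (R @ P)" using L rotate_append[of P "Q @ R"] by simp
  moreover have "distinct (map fst (R @ P))" using d(2) by auto
  ultimately show "straight_position L" unfolding straight_position_def using d(1) by blast
qed

lemma distinct3: "distinct (A @ B @ C) \<longleftrightarrow> distinct (A @ C) \<and> distinct B \<and> set B \<inter> set (A @ C) = {}"
  by (auto simp: distinct_append)
lemma Mdisj: "c1 \<noteq> c2 \<Longrightarrow> set (map (\<lambda>z. (fst z, c1)) X) \<inter> set (map (\<lambda>z. (fst z, c2)) Y) = {}"
  by auto
lemma dist3: "c1 \<noteq> c2 \<Longrightarrow> distinct (map (\<lambda>z. (fst z, c1)) P @ map (\<lambda>z. (fst z, c2)) Q @ map (\<lambda>z. (fst z, c1)) R)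
  \<longleftrightarrow> distinct (map (\<lambda>z. (fst z, c1)) (P @ R)) \<and> distinct (map (\<lambda>z. (fst z, c2)) Q)"
  unfolding distinct3 using Mdisj[of c2 c1 Q "P @ R"] by (simp del: set_map map_append add: map_append[symmetric]) 
lemma take3: "L = take x L @ take y (drop x L) @ drop (x + y) L"
proof -
  have e: "drop (x+y) L = drop y (drop x L)" by (simp add: add.commute)
  show ?thesis unfolding e append_take_drop_id by (rule refl)
qed

lemma straight_iff: "straight_position L \<longleftrightarrow>
   (\<exists>bs. length bs = length L \<and> intv bs \<and> distinct (map tagl (zip L bs)))"
proof
  assume "straight_position L"
  then obtain P Q R where L: "L = P @ Q @ R" and d: "distinct (map fst Q)" "distinct (map fst (P @ R))"
    unfolding sp_PQR by blast
  define bs where "bs = replicate (length P) False @ replicate (length Q) True @ replicate (length R) False"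
  have z: "map tagl (zip L bs) = map (\<lambda>z. (fst z, False)) P @ map (\<lambda>z. (fst z, True)) Q @ map (\<lambda>z. (fst z, False)) R"
  proof -
    have z1: "zip L bs = zip P (replicate (length P) False) @ zip (Q @ R) (replicate (length Q) True @ replicate (length R) False)"
      unfolding L bs_def by (rule zip_append) simp
    have z2: "zip (Q @ R) (replicate (length Q) True @ replicate (length R) False) = zip Q (replicate (length Q) True) @ zip R (replicate (length R) False)"
      by (rule zip_append) simp
    show ?thesis by (simp only: z1 z2 map_append tag_zip_rep)
  qed
  have h1: "distinct (map (\<lambda>z. (fst z, False)) (P @ R))" by (rule dmap[THEN iffD2], rule d(2))
  have h2: "distinct (map (\<lambda>z. (fst z, True)) Q)" by (rule dmap[THEN iffD2], rule d(1))
  have ft: "False \<noteq> True" by simp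
  have "distinct (map tagl (zip L bs))" unfolding z
    by (rule dist3[OF ft, of P Q R, THEN iffD2], rule conjI[OF h1 h2])
  moreover have "intv bs" unfolding intv_def bs_def
    by (rule exI[of _ "length P"], rule exI[of _ "length Q"], rule exI[of _ "length R"], rule exI[of _ False]) simp
  moreover have "length bs = length L" unfolding bs_def L by simp
  ultimately show "\<exists>bs. length bs = length L \<and> intv bs \<and> distinct (map tagl (zip L bs))" by blast
next
  assume "\<exists>bs. length bs = length L \<and> intv bs \<and> distinct (map tagl (zip L bs))"
  then obtain bs where len: "length bs = length L" and i: "intv bs" and d: "distinct (map tagl (zip L bs))"
    by blast
  obtain x y z c where bs: "bs = replicate x c @ replicate y (\<not> c) @ replicate z c"
    using i unfolding intv_def by blast
  define P where "P = take x L"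
  define Q where "Q = take y (drop x L)"
  define R where "R = drop (x + y) L"
  have L: "L = P @ Q @ R" unfolding P_def Q_def R_def by (rule take3)
  have lL: "length L = x + y + z" using len bs by simp
  have lP: "length P = x" unfolding P_def using lL by simp
  have lQ: "length Q = y" unfolding Q_def using lL by simp
  have lR: "length R = z" unfolding R_def using lL by simp
  have z: "map tagl (zip L bs) = map (\<lambda>z. (fst z, c)) P @ map (\<lambda>z. (fst z, \<not> c)) Q @ map (\<lambda>z. (fst z, c)) R"
  proof -
    have z1: "zip L bs = zip P (replicate x c) @ zip (Q @ R) (replicate y (\<not> c) @ replicate z c)"
      unfolding L bs by (rule zip_append) (simp add: lP)
    have z2: "zip (Q @ R) (replicate y (\<not> c) @ replicate z c) = zip Q (replicate y (\<not> c)) @ zip R (replicate z c)"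
      by (rule zip_append) (simp add: lQ)
    show ?thesis using tag_zip_rep[of P c] tag_zip_rep[of Q "\<not> c"] tag_zip_rep[of R c]
      by (simp only: z1 z2 map_append lP lQ lR)
  qed
  have dd: "distinct (map (\<lambda>z. (fst z, c)) (P @ R)) \<and> distinct (map (\<lambda>z. (fst z, \<not> c)) Q)"
  proof -
    have cc: "c \<noteq> (\<not> c)" by simp
    show ?thesis using d unfolding z by (rule dist3[OF cc, THEN iffD1])
  qed
  have "distinct (map fst (P @ R))" by (rule dmap[THEN iffD1], rule conjunct1[OF dd])
  moreover have "distinct (map fst Q)" by (rule dmap[THEN iffD1], rule conjunct2[OF dd])
  ultimately show "straight_position L" unfolding sp_PQR using L by blast
qed

lemma partner_props:
  assumes "knot_code D" "p < length D"
  shows "partner D p < length D \<and> partner D p \<noteq> p \<and> lbl D (partner D p) = lbl D p"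
proof -
  define S where "S = {i. i < length D \<and> lbl D i = lbl D p}"
  have "lbl D p \<in> crossings D" unfolding crossings_def lbl_def using assms(2) by simp
  then have c2: "card S = 2" using assms(1) unfolding knot_code_def S_def by blast
  have pS: "p \<in> S" unfolding S_def using assms(2) by simp
  have fin: "finite S" unfolding S_def by simp
  have "card (S - {p}) = 1" using c2 pS fin by simp
  then obtain j where j: "S - {p} = {j}" by (rule card_1_singletonE)
  have jS: "j < length D \<and> j \<noteq> p \<and> lbl D j = lbl D p" using j unfolding S_def by blast
  have "partner D p = j" unfolding partner_def
  proof (rule the_equality)
    show "j < length D \<and> j \<noteq> p \<and> lbl D j = lbl D p" by (rule jS)
  next
    fix j' assume "j' < length D \<and> j' \<noteq> p \<and> lbl D j' = lbl D p"
    then have "j' \<in> S - {p}" unfolding S_def by blast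
    then show "j' = j" using j by blast
  qed
  then show ?thesis using jS by simp
qed

lemma dedge_props:
  assumes "p < length D"
  shows "dedge D (p, b) < length D \<and> (p = dedge D (p, b) \<or> p = (dedge D (p, b) + 1) mod length D)"
proof (cases b)
  case True
  then show ?thesis using assms by (simp add: dedge_def)
next
  case False
  show ?thesis
  proof (cases "p = 0")
    case True
    then show ?thesis using assms False by (simp add: dedge_def)
  next
    case F2: False
    have eq: "p + length D - 1 = (p - 1) + length D" using F2 by simp
    have "(p + length D - 1) mod length D = p - 1" unfolding eq using assms by simp
    then show ?thesis using assms False F2 by (simp add: dedge_def)
  qed
qed

lemma labels_L:
  "map fst (map (\<lambda>k. (Y ! k, f k, s)) [0..<length Y]) = Y"
  by (simp add: comp_def map_nth)

lemma dfilt: "distinct (map fst xs) \<Longrightarrow> distinct (map fst (filter (\<lambda>z. fst z \<notin> S) xs))"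
  by (induct xs) auto

lemma main_gen:
  assumes iv: "intv bs" and len: "length bs = length L" and dL: "distinct (map tagl (zip L bs))"
    and h: "0 < h1" "h1 < h2" "h2 \<le> length L"
    and s1: "s1 = bs ! (h1 - 1) \<or> s1 = bs ! (h1 mod length L)"
    and s2: "s2 = bs ! (h2 - 1) \<or> s2 = bs ! (h2 mod length L)"
    and s12: "s1 \<noteq> s2"
    and lB: "length B1 = k" "length B2 = k"
    and dB: "distinct (map fst B1)" "distinct (map fst B2)"
    and disj: "fst ` set B1 \<inter> fst ` set L = {}" "fst ` set B2 \<inter> fst ` set L = {}"
  shows "straight_position (ins h1 B1 (ins h2 B2 L))"
proof -
  define n where "n = length L"
  define bs1 where "bs1 = ins h2 (replicate k s2) bs"
  define bs2 where "bs2 = ins h1 (replicate k s1) bs1"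
  have lbs1: "length bs1 = n + k" unfolding bs1_def using h len by (simp add: length_ins n_def)
  have i1: "intv bs1" unfolding bs1_def
    by (rule ins_intv) (use iv h len s2 in auto)
  have nb1: "\<And>i. i < h2 \<Longrightarrow> bs1 ! i = bs ! i"
    unfolding bs1_def using h len by (simp add: nth_ins)
  have m1: "h1 mod length bs1 = h1" using lbs1 h n_def by simp
  have m2: "h1 mod length L = h1" using h by simp
  have i2: "intv bs2" unfolding bs2_def
  proof (rule ins_intv)
    show "s1 = bs1 ! (h1 - 1) \<or> s1 = bs1 ! (h1 mod length bs1)"
      using s1 m1 m2 nb1[of "h1 - 1"] nb1[of h1] h by auto
  qed (use i1 h lbs1 n_def in auto)
  have lL1: "length (ins h2 B2 L) = n + k" using h lB by (simp add: length_ins n_def)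
  have lbs2: "length bs2 = length (ins h1 B1 (ins h2 B2 L))"
    unfolding bs2_def using lbs1 lL1 h lB n_def by (simp add: length_ins)
  have z: "zip (ins h1 B1 (ins h2 B2 L)) bs2 =
      ins h1 (zip B1 (replicate k s1)) (ins h2 (zip B2 (replicate k s2)) (zip L bs))"
    unfolding bs2_def bs1_def
    by (simp add: zip_ins lB len length_ins h lL1 lbs1[unfolded bs1_def] n_def)
  have t1: "map tagl (zip B1 (replicate k s1)) = map (\<lambda>z. (fst z, s1)) B1"
    using tag_zip_rep[of B1 s1] lB by simp
  have t2: "map tagl (zip B2 (replicate k s2)) = map (\<lambda>z. (fst z, s2)) B2"
    using tag_zip_rep[of B2 s2] lB by simp
  have sL: "set (map tagl (zip L bs)) \<subseteq> fst ` set L \<times> UNIV"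
  proof
    fix x assume "x \<in> set (map tagl (zip L bs))"
    then obtain u v where uv: "(u, v) \<in> set (zip L bs)" "x = tagl (u, v)" by auto
    have "u \<in> set L" using uv(1) by (rule set_zip_leftD)
    then show "x \<in> fst ` set L \<times> UNIV" using uv(2) by (simp add: tagl_def)
  qed
  have dd: "distinct (map tagl (zip (ins h1 B1 (ins h2 B2 L)) bs2))"
    unfolding z map_ins t1 t2 distinct_ins set_ins
  proof (intro conjI)
    show "distinct (map (\<lambda>z. (fst z, s1)) B1)" by (rule dmap[THEN iffD2], rule dB(1))
    show "distinct (map (\<lambda>z. (fst z, s2)) B2)" by (rule dmap[THEN iffD2], rule dB(2))
    show "distinct (map tagl (zip L bs))" by (rule dL)
    show "set (map (\<lambda>z. (fst z, s2)) B2) \<inter> set (map tagl (zip L bs)) = {}"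
      using sL disj(2) by fastforce
    show "set (map (\<lambda>z. (fst z, s1)) B1) \<inter> (set (map (\<lambda>z. (fst z, s2)) B2) \<union> set (map tagl (zip L bs))) = {}"
      using sL disj(1) s12 by fastforce
  qed
  show ?thesis unfolding straight_iff using dd i2 lbs2 by blast
qed

theorem lemma4p3:
  assumes "knot_diagram D"
    and "twist_increase D D'"
  shows "straight_position D \<longleftrightarrow> straight_position D'"
proof -
  have kc: "knot_code D" using assms(1) unfolding knot_diagram_def by blast
  obtain T d Y m where dD: "d \<in> darts D" and ne: "dedge D d \<noteq> dedge D (drot D d)"
      and disj: "set Y \<inter> crossings D = {}" and dY: "distinct Y" and D': "D' = add_twists D d Y"
    using assms(2) unfolding twist_increase_def by blast
  obtain p b where d: "d = (p, b)" by (cases d)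
  define n where "n = length D"
  have pn: "p < n" using dD d unfolding darts_def n_def by auto
  define p' where "p' = partner D p"
  have pp: "p' < n \<and> p' \<noteq> p \<and> lbl D p' = lbl D p"
    using partner_props[OF kc] pn unfolding p'_def n_def by blast
  define b' where "b' = (if is_pos D p = is_over D p then b else \<not> b)"
  have c: "drot D d = (p', b')" unfolding d drot_def p'_def b'_def by simp
  define e where "e = dedge D (p, b)"
  define f where "f = dedge D (p', b')"
  have ep: "e < n \<and> (p = e \<or> p = (e + 1) mod n)"
    using dedge_props[of p D b] pn unfolding e_def n_def by blast
  have fp: "f < n \<and> (p' = f \<or> p' = (f + 1) mod n)"
    using dedge_props[of p' D b'] pp unfolding f_def n_def by blast
  have ef: "e \<noteq> f" using ne c unfolding e_def f_def d by simp
  define Le where "Le = map (\<lambda>k. (Y ! k, is_over D p = odd k, is_pos D p)) [0..<length Y]"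
  define Lf where "Lf = map (\<lambda>k. (Y ! k, \<not> (is_over D p = odd k), is_pos D p)) [0..<length Y]"
  define Ae where "Ae = (if b then Le else rev Le)"
  define Af where "Af = (if b' then Lf else rev Lf)"
  have c2: "drot D (p, b) = (p', b')" using c d by simp
  have D'eq: "D' = ins2 (e + 1) Ae (f + 1) Af D"
    unfolding D' d add_twists_def Let_def c2 fst_conv snd_conv e_def f_def Ae_def Af_def Le_def Lf_def
    by (rule refl)
  have mLe: "map fst Le = Y" unfolding Le_def by (rule labels_L)
  have mLf: "map fst Lf = Y" unfolding Lf_def by (rule labels_L)
  have rLe: "map fst (rev Le) = rev Y" using mLe rev_map[of fst Le] by metis
  have rLf: "map fst (rev Lf) = rev Y" using mLf rev_map[of fst Lf] by metis
  have mAe: "map fst Ae = (if b then Y else rev Y)" unfolding Ae_def using mLe rLe by simp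
  have mAf: "map fst Af = (if b' then Y else rev Y)" unfolding Af_def using mLf rLf by simp
  have dAe: "distinct (map fst Ae)" using mAe dY by simp
  have dAf: "distinct (map fst Af)" using mAf dY by simp
  have sAe: "fst ` set Ae = set Y"
  proof -
    have "set (map fst Ae) = set Y" using mAe by simp
    then show ?thesis by simp
  qed
  have sAf: "fst ` set Af = set Y"
  proof -
    have "set (map fst Af) = set Y" using mAf by simp
    then show ?thesis by simp
  qed
  have lAe: "length Ae = length Y" using mAe by (metis length_map length_rev)
  have lAf: "length Af = length Y" using mAf by (metis length_map length_rev)
  have cD: "crossings D = fst ` set D" unfolding crossings_def by simp
  have disjE: "fst ` set Ae \<inter> fst ` set D = {}" using disj sAe cD by simp
  have disjF: "fst ` set Af \<inter> fst ` set D = {}" using disj sAf cD by simp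
  show ?thesis
  proof
    assume "straight_position D"
    then obtain bs where len: "length bs = length D" and iv: "intv bs" and dL: "distinct (map tagl (zip D bs))"
      unfolding straight_iff by blast
    have ent: "map tagl (zip D bs) ! i = (lbl D i, bs ! i)" if "i < n" for i
      using that len unfolding n_def by (simp add: tagl_def lbl_def)
    have s12: "bs ! p \<noteq> bs ! p'"
    proof
      assume "bs ! p = bs ! p'"
      then have "map tagl (zip D bs) ! p = map tagl (zip D bs) ! p'" using ent pn pp by simp
      moreover have "p < length (map tagl (zip D bs))" "p' < length (map tagl (zip D bs))"
        using pn pp len unfolding n_def by auto
      ultimately have "p = p'" using dL nth_eq_iff_index_eq by blast
      then show False using pp by simp
    qed
    have se: "bs ! p = bs ! (e + 1 - 1) \<or> bs ! p = bs ! ((e + 1) mod length D)"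
      using ep unfolding n_def by auto
    have sf: "bs ! p' = bs ! (f + 1 - 1) \<or> bs ! p' = bs ! ((f + 1) mod length D)"
      using fp unfolding n_def by auto
    show "straight_position D'"
    proof (cases "e < f")
      case True
      have "D' = ins (e + 1) Ae (ins (f + 1) Af D)"
        unfolding D'eq using True fp by (simp add: ins2_le n_def)
      moreover have "straight_position (ins (e + 1) Ae (ins (f + 1) Af D))"
        by (rule main_gen[OF iv len dL _ _ _ se sf s12 lAe lAf dAe dAf disjE disjF])
           (use True fp n_def in auto)
      ultimately show ?thesis by simp
    next
      case False
      then have fe: "f < e" using ef by simp
      have "D' = ins (f + 1) Af (ins (e + 1) Ae D)"
        unfolding D'eq using fe ep by (simp add: ins2_gt n_def)
      moreover have "straight_position (ins (f + 1) Af (ins (e + 1) Ae D))"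
        by (rule main_gen[OF iv len dL _ _ _ sf se s12[symmetric] lAf lAe dAf dAe disjF disjE])
           (use fe ep n_def in auto)
      ultimately show ?thesis by simp
    qed
  next
    assume "straight_position D'"
    then obtain P Q R where PQR: "D' = P @ Q @ R" and dQ: "distinct (map fst Q)" and dPR: "distinct (map fst (P @ R))"
      unfolding sp_PQR by blast
    define F where "F = (\<lambda>z::nat \<times> bool \<times> bool. fst z \<notin> set Y)"
    have nE: "\<forall>x\<in>set Ae. \<not> F x" using sAe unfolding F_def by auto
    have nF: "\<forall>x\<in>set Af. \<not> F x" using sAf unfolding F_def by auto
    have fD: "filter F D = D" using disj cD unfolding F_def by (auto simp: filter_id_conv)
    have filt: "filter F D' = D"
    proof (cases "e < f")
      case True
      have "D' = ins (e + 1) Ae (ins (f + 1) Af D)"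
        unfolding D'eq using True fp by (simp add: ins2_le n_def)
      then show ?thesis using filter_ins[OF nE] filter_ins[OF nF] fD by simp
    next
      case False
      then have fe: "f < e" using ef by simp
      have "D' = ins (f + 1) Af (ins (e + 1) Ae D)"
        unfolding D'eq using fe ep by (simp add: ins2_gt n_def)
      then show ?thesis using filter_ins[OF nE] filter_ins[OF nF] fD by simp
    qed
    have "D = filter F P @ filter F Q @ filter F R" using filt PQR by simp
    moreover have "distinct (map fst (filter F Q))" using dfilt[OF dQ] unfolding F_def by simp
    moreover have "distinct (map fst (filter F P @ filter F R))"
      using dfilt[OF dPR, of "set Y"] unfolding F_def by simp
    ultimately show "straight_position D" unfolding sp_PQR by blast
  qed
qed

end
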